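(* Let $\delta_1\in(0,1)$, $\epsilon_1>0$, and $$\theta_1=\frac{4\,\hat{INF}_F\,\log(1/\delta_1)}{\epsilon_1^2(1-\epsilon')\,OPT}.$$ Let $\mathcal R$ be a collection of $\theta$ independent random RDR sets, where $\theta\ge\theta_1$. Then, with probability at least $1-\delta_1$, $$n\cdot F_{\mathcal R}(S^o)\ \ge\ (1-\epsilon')(1-\epsilon_1)\cdot OPT .$$
   Context: Setting: $G=(V,E)$ is a directed graph with $n=|V|$ nodes. A misinformation campaign $F$ with seed set $S_F$ spreads in $G$ under the paper's competitive propagation model (TCIC), and $INF_F$ is the expected number of nodes reached by $F$. $\sigma(\cdot)$ denotes either of the two submodular set functions (the lower bound $\underline\mu$ or the upper bound $\overline\mu$ of the expected misinformation-mitigation function $\mu(S)$ of a mitigation seed set $S\subseteq V$). $k$ is a positive integer. $S^o$ is a size-$k$ node set that maximizes $\sigma$, and $OPT=\sigma(S^o)$. $\hat{INF}_F$ is an $(\epsilon',\delta')$-approximation of $INF_F$, and $\Gamma=\hat{INF}_F/INF_F$; throughout, $\hat{INF}_F$ is treated as fixed with $1-\epsilon'\le\Gamma\le1+\epsilon'$, and $\hat{INF}_F\le n$. A random RDR (reverse-reachable, weighted) set is generated by importance sampling; for a node set $S$ and the $i$-th RDR set of a collection, $\hat Z_i(S)\ge 0$ denotes its importance-sampling reward estimator ($\hat{INF}_F/n$ times the weight of that RDR set covered by $S$). For a collection $\mathcal R$ of $\theta$ independent random RDR sets, $F_{\mathcal R}(S)=\frac1\theta\sum_{i=1}^\theta\hat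 Z_i(S)$. Properties used: (i) $\mathbb E[\hat Z_i(S)]=\Gamma\,\sigma(S)/n$; (ii) for $p=\mathbb E[\hat Z_i(S)]$ and every $\lambda>0$: $\Pr[\sum_i\hat Z_i(S)-\theta p\ge\lambda]\le\exp\!\big(-\lambda^2/(\tfrac23\lambda+4\theta p\,\hat{INF}_F/n)\big)$ and $\Pr[\sum_i\hat Z_i(S)-\theta p\le-\lambda]\le\exp\!\big(-\lambda^2/(4\theta p\,\hat{INF}_F/n)\big)$. *)

theory Defs
  imports "HOL-Probability.Probability"
begin

text \<open>Z S i \<omega> is the importance-sampling reward estimator of the i-th random RDR set
  (i = 0,1,2,...) for the node set S, in outcome \<omega>.  A collection R of
  \<theta> independent RDR sets corresponds to the first \<theta> indices.\<close>

definition F_R :: "('v set \<Rightarrow> nat \<Rightarrow> 'a \<Rightarrow> real) \<Rightarrow> nat \<Rightarrow> 'v set \<Rightarrow> 'a \<Rightarrow> real" where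
  "F_R Z \<theta> S \<omega> = (1 / real \<theta>) * (\<Sum>i<\<theta>. Z S i \<omega>)"

end

theory Submission
  imports Defs
begin

theorem mainTheorem1:
  fixes M :: "'a measure"
    and V :: "'v set"
    and \<sigma> :: "'v set \<Rightarrow> real"
    and k :: nat
    and So :: "'v set"
    and Z :: "'v set \<Rightarrow> nat \<Rightarrow> 'a \<Rightarrow> real"
    and INF_F INFhat_F eps' \<delta>1 \<epsilon>1 :: real
    and \<theta> :: nat
  assumes "prob_space M"
    and "finite V"
    and "0 < k"
    and "So \<subseteq> V" and "card So = k"
    and "\<forall>S. S \<subseteq> V \<and> card S = k \<longrightarrow> \<sigma> S \<le> \<sigma> So"
    and "0 < \<sigma> So"
    and "0 < eps'" and "eps' < 1"
    and "0 < INF_F"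
    and "1 - eps' \<le> INFhat_F / INF_F" and "INFhat_F / INF_F \<le> 1 + eps'"
    and "INFhat_F \<le> real (card V)"
    and "\<forall>S i. \<forall>\<omega>\<in>space M. 0 \<le> Z S i \<omega>"
    and "\<forall>S i. Z S i \<in> borel_measurable M"
    and "\<forall>S. prob_space.indep_vars M (\<lambda>_. borel) (Z S) UNIV"
    and "\<forall>S i. S \<subseteq> V \<longrightarrow>
           integral\<^sup>L M (Z S i) = (INFhat_F / INF_F) * \<sigma> S / real (card V)"
    and "\<forall>S t lam. S \<subseteq> V \<and> 0 < lam \<longrightarrow>
           measure M {\<omega> \<in> space M.
              (\<Sum>i<t. Z S i \<omega>) - real t * ((INFhat_F / INF_F) * \<sigma> S / real (card V)) \<ge> lam}
           \<le> exp (- (lam^2 / (2/3 * lam + 4 * real t * ((INFhat_F / INF_F) * \<sigma> S / real (card V))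
                                  * INFhat_F / real (card V))))"
    and "\<forall>S t lam. S \<subseteq> V \<and> 0 < lam \<longrightarrow>
           measure M {\<omega> \<in> space M.
              (\<Sum>i<t. Z S i \<omega>) - real t * ((INFhat_F / INF_F) * \<sigma> S / real (card V)) \<le> - lam}
           \<le> exp (- (lam^2 / (4 * real t * ((INFhat_F / INF_F) * \<sigma> S / real (card V))
                                  * INFhat_F / real (card V))))"
    and "0 < \<delta>1" and "\<delta>1 < 1"
    and "0 < \<epsilon>1"
    and "real \<theta> \<ge> 4 * INFhat_F * ln (1 / \<delta>1) / (\<epsilon>1^2 * (1 - eps') * \<sigma> So)"
  shows "measure M {\<omega> \<in> space M.
            real (card V) * F_R Z \<theta> So \<omega> \<ge> (1 - eps') * (1 - \<epsilon>1) * \<sigma> So} \<ge> 1 - \<delta>1"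
proof -
  interpret P: prob_space M by fact
  define N where "N = real (card V)"
  define G where "G = INFhat_F / INF_F"
  define s where "s = \<sigma> So"
  define p where "p = G * s / N"
  define th where "th = real \<theta>"
  define c where "c = (1 - eps') * (1 - \<epsilon>1) * s"
  have fin: "finite So" using assms(2,4) finite_subset by blast
  have "card So \<le> card V" using assms(2,4) card_mono by blast
  hence Npos: "N > 0" using assms(3,5) N_def by simp
  have Gpos: "G \<ge> 1 - eps'" using assms(11) G_def by simp
  have G0: "G > 0" using Gpos assms(9) by simp
  have s0: "s > 0" using assms(7) s_def by simp
  have hatpos: "INFhat_F > 0"
  proof -
    have "INFhat_F / INF_F > 0" using Gpos assms(9) G_def by simp
    thus ?thesis using assms(10) by (simp add: zero_less_divide_iff)
  qed
  have p0: "p > 0" using G0 s0 Npos p_def by simp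
  have lnpos: "ln (1 / \<delta>1) > 0" using assms(20,21) by simp
  have th1: "th \<ge> 4 * INFhat_F * ln (1 / \<delta>1) / (\<epsilon>1^2 * (1 - eps') * s)"
    using assms(23) th_def s_def by simp
  have "4 * INFhat_F * ln (1 / \<delta>1) / (\<epsilon>1^2 * (1 - eps') * s) > 0"
    using hatpos lnpos assms(9,22) s0 by simp
  hence thpos: "th > 0" using th1 by linarith
  define lam where "lam = \<epsilon>1 * th * p"
  have lam0: "lam > 0" using lam_def assms(22) thpos p0 by simp
  define A where "A = {\<omega> \<in> space M. (\<Sum>i<\<theta>. Z So i \<omega>) - real \<theta> * ((INFhat_F / INF_F) * \<sigma> So / real (card V)) \<le> - lam}"
  have tail: "measure M A \<le> exp (- (lam^2 / (4 * real \<theta> * ((INFhat_F / INF_F) * \<sigma> So / real (card V))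
                                  * INFhat_F / real (card V))))"
    using assms(19) assms(4) lam0 unfolding A_def by blast
  have eq: "lam^2 / (4 * real \<theta> * ((INFhat_F / INF_F) * \<sigma> So / real (card V))
                                  * INFhat_F / real (card V)) = \<epsilon>1^2 * th * G * s / (4 * INFhat_F)"
    unfolding lam_def p_def G_def[symmetric] s_def[symmetric] th_def[symmetric] N_def[symmetric]
    using Npos thpos hatpos by (simp add: field_simps power2_eq_square)
  have "\<epsilon>1^2 * th * G * s / (4 * INFhat_F) \<ge> \<epsilon>1^2 * th * (1 - eps') * s / (4 * INFhat_F)"
    using Gpos assms(22) thpos s0 hatpos
    by (intro divide_right_mono mult_right_mono mult_left_mono) auto
  moreover have "\<epsilon>1^2 * th * (1 - eps') * s / (4 * INFhat_F) \<ge> ln (1 / \<delta>1)"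
  proof -
    have d: "\<epsilon>1^2 * (1 - eps') * s > 0" using assms(9,22) s0 by simp
    have "th * (\<epsilon>1^2 * (1 - eps') * s) \<ge> 4 * INFhat_F * ln (1 / \<delta>1)"
      using th1 d by (simp add: pos_divide_le_eq)
    thus ?thesis using hatpos by (simp add: pos_le_divide_eq algebra_simps)
  qed
  ultimately have "exp (- (lam^2 / (4 * real \<theta> * ((INFhat_F / INF_F) * \<sigma> So / real (card V))
                                  * INFhat_F / real (card V)))) \<le> exp (- ln (1 / \<delta>1))"
    unfolding eq by simp
  also have "\<dots> = \<delta>1" using assms(20) by (simp add: ln_div)
  finally have Ale: "measure M A \<le> \<delta>1" using tail by linarith
  have Zm: "\<And>i. Z So i \<in> borel_measurable M" using assms(15) by blast
  have Ameas: "A \<in> sets M" unfolding A_def using Zm by measurable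
  define B where "B = {\<omega> \<in> space M. real (card V) * F_R Z \<theta> So \<omega> \<ge> (1 - eps') * (1 - \<epsilon>1) * \<sigma> So}"
  have Bmeas: "B \<in> sets M" unfolding B_def F_R_def using Zm by measurable
  have sub: "space M - A \<subseteq> B"
  proof
    fix \<omega> assume w: "\<omega> \<in> space M - A"
    show "\<omega> \<in> B"
    proof (rule ccontr)
      assume nb: "\<omega> \<notin> B"
      define S where "S = (\<Sum>i<\<theta>. Z So i \<omega>)"
      have S0: "S \<ge> 0" unfolding S_def using assms(14) w by (auto intro: sum_nonneg)
      have "N * ((1 / th) * S) < c" using nb w unfolding B_def F_R_def S_def N_def th_def c_def s_def by auto
      hence "N * S / th < c" by simp
      hence "N * S < c * th" using thpos by (simp add: divide_less_eq)
      hence Slt: "S < th * c / N" using Npos by (simp add: less_divide_eq mult.commute)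
      hence "0 < th * c / N" using S0 by linarith
      hence "0 < th * c" using Npos by (simp add: zero_less_divide_iff)
      hence "c > 0" using thpos by (simp add: zero_less_mult_iff)
      hence "0 < (1 - eps') * (1 - \<epsilon>1) * s" unfolding c_def .
      hence "0 < 1 - \<epsilon>1" using assms(9) s0 by (simp add: zero_less_mult_iff)
      hence e1: "\<epsilon>1 < 1" by simp
      have "th * c / N \<le> (1 - \<epsilon>1) * th * p"
      proof -
        have "(1 - eps') * (1 - \<epsilon>1) * s \<le> G * (1 - \<epsilon>1) * s"
          using Gpos e1 s0 by (intro mult_right_mono) auto
        hence "th * ((1 - eps') * (1 - \<epsilon>1) * s) / N \<le> th * (G * (1 - \<epsilon>1) * s) / N"
          using Npos thpos by (intro divide_right_mono mult_left_mono) auto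
        thus ?thesis unfolding c_def p_def by (simp add: algebra_simps)
      qed
      hence "S - th * p \<le> - lam" using Slt lam_def by (simp add: algebra_simps)
      hence "\<omega> \<in> A" using w unfolding A_def S_def th_def p_def G_def s_def N_def by auto
      thus False using w by blast
    qed
  qed
  have "measure M B \<ge> measure M (space M - A)"
    using sub Bmeas by (intro P.finite_measure_mono) auto
  moreover have "measure M (space M - A) = 1 - measure M A" using Ameas P.prob_compl by simp
  ultimately show ?thesis unfolding B_def using Ale by linarith
qed

end
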